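(* Let $(A,B,\alpha)$ be a topological crossed module. Let $L=\{[\gamma]\in\pi A:\gamma(0)=0\}$, $M=\{[\beta]\in\pi B:\beta(0)=0\}$, $N=A$, $P=B$, with $\lambda[\gamma]=[\alpha\circ\gamma]$, $\lambda'[\gamma]=\gamma(1)$, $\mu[\beta]=\beta(1)$, $\nu=\alpha$. Let $P=B$ act on $N=A$ by the given action, on $L$ by $b\cdot[\gamma]=[r\mapsto b\cdot\gamma(r)]$, and on $M$ by $b\cdot[\beta]=[r\mapsto b+\beta(r)-b]$, and define $h:M\times N\to L$ by $h([\beta],a)=[r\mapsto\beta(r)\cdot a-a]$. Then $(L,M,N,P)$ with these data is a crossed square.
   Context: Groups are written additively. A crossed module $(A,B,\alpha)$: groups $A,B$, a left action of $B$ on $A$ by automorphisms, a homomorphism $\alpha:A\to B$ with $\alpha(b\cdot a)=b+\alpha(a)-b$ and $\alpha(a)\cdot a'=a+a'-a$. A topological crossed module is a crossed module in which $A,B$ are topological groups and $\alpha$ and the action are continuous. For a topological group $X$, $\pi X$ is the set of homotopy classes rel endpoints of paths $[0,1]\to X$, a group under pointwise addition. A crossed square: homomorphisms $\lambda:L\to M$, $\lambda':L\to N$, $\mu:M\to P$, $\nu:N\to P$ with $\nu\lambda'=\mu\lambda$, left actions of $P$ on $L,M,N$ (inducing actions of $M$ on $L,N$ via $\mu$ and of $N$ on $L,M$ via $\nu$, e.g. $m\cdot n=\mu(m)\cdot n$), and a function $h:M\times N\to L$, such that (i) $\lambda,\lambda'$ are $P$-equivariant and $\mu$, $\nu$, $\mu\lambda$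 are crossed modules; (ii) $\lambda h(m,n)=m+n\cdot(-m)$, $\lambda'h(m,n)=m\cdot n-n$; (iii) $h(\lambda(l),n)=l+n\cdot(-l)$, $h(m,\lambda'(l))=m\cdot l-l$; (iv) $h(m+m',n)=m\cdot h(m',n)+h(m,n)$, $h(m,n+n')=h(m,n)+n\cdot h(m,n')$; (v) $h(p\cdot m,p\cdot n)=p\cdot h(m,n)$, for all $l\in L$, $m,m'\in M$, $n,n'\in N$, $p\in P$. *)

theory Defs
  imports "HOL-Analysis.Analysis" "HOL-Algebra.Group"
begin

text \<open>Groups are HOL-Algebra groups (written multiplicatively here; the paper writes them
additively: \<open>x + y\<close> is \<open>x \<otimes> y\<close>, \<open>-x\<close> is \<open>inv x\<close>, \<open>0\<close> is \<open>\<one>\<close>).\<close>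

definition action_by_aut :: "('b,'c) monoid_scheme \<Rightarrow> ('a,'d) monoid_scheme \<Rightarrow> ('b \<Rightarrow> 'a \<Rightarrow> 'a) \<Rightarrow> bool" where
  "action_by_aut B A act \<equiv>
     (\<forall>b\<in>carrier B. act b \<in> iso A A) \<and>
     (\<forall>a\<in>carrier A. act \<one>\<^bsub>B\<^esub> a = a) \<and>
     (\<forall>b\<in>carrier B. \<forall>b'\<in>carrier B. \<forall>a\<in>carrier A. act (b \<otimes>\<^bsub>B\<^esub> b') a = act b (act b' a))"

definition crossed_module :: "('a,'c) monoid_scheme \<Rightarrow> ('b,'d) monoid_scheme \<Rightarrow> ('a \<Rightarrow> 'b) \<Rightarrow> ('b \<Rightarrow> 'a \<Rightarrow> 'a) \<Rightarrow> bool" where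
  "crossed_module A B \<alpha> act \<equiv>
     group A \<and> group B \<and> action_by_aut B A act \<and> \<alpha> \<in> hom A B \<and>
     (\<forall>b\<in>carrier B. \<forall>a\<in>carrier A. \<alpha> (act b a) = b \<otimes>\<^bsub>B\<^esub> \<alpha> a \<otimes>\<^bsub>B\<^esub> inv\<^bsub>B\<^esub> b) \<and>
     (\<forall>a\<in>carrier A. \<forall>a'\<in>carrier A. act (\<alpha> a) a' = a \<otimes>\<^bsub>A\<^esub> a' \<otimes>\<^bsub>A\<^esub> inv\<^bsub>A\<^esub> a)"

definition topological_group :: "('a,'c) monoid_scheme \<Rightarrow> 'a topology \<Rightarrow> bool" where
  "topological_group G T \<equiv>
     group G \<and> topspace T = carrier G \<and>
     continuous_map (prod_topology T T) T (\<lambda>(x,y). x \<otimes>\<^bsub>G\<^esub> y) \<and>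
     continuous_map T T (\<lambda>x. inv\<^bsub>G\<^esub> x)"

definition topological_crossed_module ::
  "('a,'c) monoid_scheme \<Rightarrow> 'a topology \<Rightarrow> ('b,'d) monoid_scheme \<Rightarrow> 'b topology \<Rightarrow>
   ('a \<Rightarrow> 'b) \<Rightarrow> ('b \<Rightarrow> 'a \<Rightarrow> 'a) \<Rightarrow> bool" where
  "topological_crossed_module A TA B TB \<alpha> act \<equiv>
     crossed_module A B \<alpha> act \<and> topological_group A TA \<and> topological_group B TB \<and>
     continuous_map TA TB \<alpha> \<and>
     continuous_map (prod_topology TB TA) TA (\<lambda>(b,a). act b a)"

definition homotopic_rel_ends :: "'a topology \<Rightarrow> (real \<Rightarrow> 'a) \<Rightarrow> (real \<Rightarrow> 'a) \<Rightarrow> bool" where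
  "homotopic_rel_ends X p q \<equiv>
     homotopic_with (\<lambda>r. r 0 = p 0 \<and> r 1 = p 1) (subtopology euclideanreal {0..1}) X p q"

definition path_class :: "'a topology \<Rightarrow> (real \<Rightarrow> 'a) \<Rightarrow> (real \<Rightarrow> 'a) set" where
  "path_class X p = {q. pathin X q \<and> homotopic_rel_ends X p q}"

definition rep :: "(real \<Rightarrow> 'a) set \<Rightarrow> real \<Rightarrow> 'a" where
  "rep C = (SOME p. p \<in> C)"

definition pi_group :: "('a,'c) monoid_scheme \<Rightarrow> 'a topology \<Rightarrow> (real \<Rightarrow> 'a) set monoid" where
  "pi_group G T =
     \<lparr> carrier = {path_class T p | p. pathin T p},
       mult = (\<lambda>C D. path_class T (\<lambda>r. rep C r \<otimes>\<^bsub>G\<^esub> rep D r)),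
       one = path_class T (\<lambda>r. \<one>\<^bsub>G\<^esub>) \<rparr>"

text \<open>Crossed square; induced actions \<open>m\<cdot>x = \<mu>(m)\<cdot>x\<close>, \<open>n\<cdot>x = \<nu>(n)\<cdot>x\<close>.\<close>
definition crossed_square ::
  "('l,'e1) monoid_scheme \<Rightarrow> ('m,'e2) monoid_scheme \<Rightarrow> ('n,'e3) monoid_scheme \<Rightarrow> ('p,'e4) monoid_scheme \<Rightarrow>
   ('l \<Rightarrow> 'm) \<Rightarrow> ('l \<Rightarrow> 'n) \<Rightarrow> ('m \<Rightarrow> 'p) \<Rightarrow> ('n \<Rightarrow> 'p) \<Rightarrow>
   ('p \<Rightarrow> 'l \<Rightarrow> 'l) \<Rightarrow> ('p \<Rightarrow> 'm \<Rightarrow> 'm) \<Rightarrow> ('p \<Rightarrow> 'n \<Rightarrow> 'n) \<Rightarrow> ('m \<Rightarrow> 'n \<Rightarrow> 'l) \<Rightarrow> bool" where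
  "crossed_square L M N P lam lam' mu nu actL actM actN h \<equiv>
     lam \<in> hom L M \<and> lam' \<in> hom L N \<and> mu \<in> hom M P \<and> nu \<in> hom N P \<and>
     (\<forall>l\<in>carrier L. nu (lam' l) = mu (lam l)) \<and>
     action_by_aut P L actL \<and> action_by_aut P M actM \<and> action_by_aut P N actN \<and>
     h \<in> carrier M \<rightarrow> carrier N \<rightarrow> carrier L \<and>
     \<comment> \<open>(i)\<close>
     (\<forall>p\<in>carrier P. \<forall>l\<in>carrier L. lam (actL p l) = actM p (lam l)) \<and>
     (\<forall>p\<in>carrier P. \<forall>l\<in>carrier L. lam' (actL p l) = actN p (lam' l)) \<and>
     crossed_module M P mu actM \<and> crossed_module N P nu actN \<and>
     crossed_module L P (\<lambda>l. mu (lam l)) actL \<and>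
     \<comment> \<open>(ii)\<close>
     (\<forall>m\<in>carrier M. \<forall>n\<in>carrier N.
        lam (h m n) = m \<otimes>\<^bsub>M\<^esub> actM (nu n) (inv\<^bsub>M\<^esub> m)) \<and>
     (\<forall>m\<in>carrier M. \<forall>n\<in>carrier N.
        lam' (h m n) = actN (mu m) n \<otimes>\<^bsub>N\<^esub> inv\<^bsub>N\<^esub> n) \<and>
     \<comment> \<open>(iii)\<close>
     (\<forall>l\<in>carrier L. \<forall>n\<in>carrier N.
        h (lam l) n = l \<otimes>\<^bsub>L\<^esub> actL (nu n) (inv\<^bsub>L\<^esub> l)) \<and>
     (\<forall>m\<in>carrier M. \<forall>l\<in>carrier L.
        h m (lam' l) = actL (mu m) l \<otimes>\<^bsub>L\<^esub> inv\<^bsub>L\<^esub> l) \<and>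
     \<comment> \<open>(iv)\<close>
     (\<forall>m\<in>carrier M. \<forall>m'\<in>carrier M. \<forall>n\<in>carrier N.
        h (m \<otimes>\<^bsub>M\<^esub> m') n = actL (mu m) (h m' n) \<otimes>\<^bsub>L\<^esub> h m n) \<and>
     (\<forall>m\<in>carrier M. \<forall>n\<in>carrier N. \<forall>n'\<in>carrier N.
        h m (n \<otimes>\<^bsub>N\<^esub> n') = h m n \<otimes>\<^bsub>L\<^esub> actL (nu n) (h m n')) \<and>
     \<comment> \<open>(v)\<close>
     (\<forall>p\<in>carrier P. \<forall>m\<in>carrier M. \<forall>n\<in>carrier N.
        h (actM p m) (actN p n) = actL p (h m n))"

end

theory Submission
  imports Defs "HOL-Analysis.Analysis" "HOL-Algebra.Group"
begin

lemma hre_intro: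
  assumes H: "continuous_map (prod_topology (top_of_set {0..1::real}) (top_of_set {0..1::real})) T H"
    and h0: "\<And>r. r\<in>{0..1} \<Longrightarrow> H(0,r) = p r" and h1: "\<And>r. r\<in>{0..1} \<Longrightarrow> H(1,r) = q r"
    and e0: "\<And>s. s\<in>{0..1} \<Longrightarrow> H(s,0) = p 0" and e1: "\<And>s. s\<in>{0..1} \<Longrightarrow> H(s,1) = p 1"
  shows "homotopic_rel_ends T p q"
  unfolding homotopic_rel_ends_def
proof (subst homotopic_with)
  show "\<exists>h. continuous_map (prod_topology (top_of_set {0..1::real}) (top_of_set {0..1::real})) T h \<and>
        (\<forall>x\<in>topspace (top_of_set {0..1}). h (0, x) = p x) \<and>
        (\<forall>x\<in>topspace (top_of_set {0..1}). h (1, x) = q x) \<and>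
        (\<forall>t\<in>{0..1}. h (t, 0) = p 0 \<and> h (t, 1) = p 1)"
    by (rule exI[of _ H]) (use assms in auto)
qed auto

lemma hre_ends: "homotopic_rel_ends T p q \<Longrightarrow> q 0 = p 0 \<and> q 1 = p 1"
proof -
  assume "homotopic_rel_ends T p q"
  then have "(\<lambda>r. r 0 = p 0 \<and> r 1 = p 1) q"
    unfolding homotopic_rel_ends_def by (rule homotopic_with_imp_property[THEN conjunct2])
  then show ?thesis by simp
qed

lemma hre_paths: "homotopic_rel_ends T p q \<Longrightarrow> pathin T p \<and> pathin T q"
  unfolding homotopic_rel_ends_def pathin_def using homotopic_with_imp_continuous_maps by blast

lemma hre_refl: "pathin T p \<Longrightarrow> homotopic_rel_ends T p p"
  unfolding homotopic_rel_ends_def pathin_def by simp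

lemma hre_sym: assumes "homotopic_rel_ends T p q" shows "homotopic_rel_ends T q p"
proof -
  have e: "q 0 = p 0" "q 1 = p 1" using hre_ends[OF assms] by auto
  have "homotopic_with (\<lambda>r. r 0 = p 0 \<and> r 1 = p 1) (subtopology euclideanreal {0..1}) T q p"
    using assms unfolding homotopic_rel_ends_def by (rule homotopic_with_symD)
  then show ?thesis unfolding homotopic_rel_ends_def e .
qed

lemma hre_trans: assumes "homotopic_rel_ends T p q" "homotopic_rel_ends T q s"
  shows "homotopic_rel_ends T p s"
proof -
  have e: "q 0 = p 0" "q 1 = p 1" using hre_ends[OF assms(1)] by auto
  have "homotopic_with (\<lambda>r. r 0 = p 0 \<and> r 1 = p 1) (subtopology euclideanreal {0..1}) T q s"
    using assms(2) unfolding homotopic_rel_ends_def e .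
  with assms(1) show ?thesis unfolding homotopic_rel_ends_def
    using homotopic_with_trans by blast
qed

lemma cls_eq: assumes "homotopic_rel_ends T p q" shows "path_class T p = path_class T q"
  unfolding path_class_def using assms hre_sym hre_trans by blast

lemma cls_self: "pathin T p \<Longrightarrow> p \<in> path_class T p"
  unfolding path_class_def using hre_refl by blast

lemma mem_cls: "q \<in> path_class T p \<Longrightarrow> pathin T q \<and> homotopic_rel_ends T p q"
  unfolding path_class_def by blast

lemma rep_cls: assumes "pathin T p"
  shows "homotopic_rel_ends T p (rep (path_class T p))" "pathin T (rep (path_class T p))"
proof -
  have "rep (path_class T p) \<in> path_class T p"
    unfolding rep_def using cls_self[OF assms] by (metis someI)
  then show "homotopic_rel_ends T p (rep (path_class T p))" "pathin T (rep (path_class T p))"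
    using mem_cls by blast+
qed

lemma rep_cls_ends: assumes "pathin T p"
  shows "rep (path_class T p) 0 = p 0" "rep (path_class T p) 1 = p 1"
  using hre_ends[OF rep_cls(1)[OF assms]] by auto

lemma cls_pointwise:
  assumes "pathin T p" "\<And>r. r \<in> {0..1} \<Longrightarrow> p r = q r"
  shows "path_class T p = path_class T q"
proof (rule cls_eq)
  show "homotopic_rel_ends T p q" unfolding homotopic_rel_ends_def
    using assms by (intro homotopic_with_equal) (auto simp: pathin_def)
qed

lemma hre_map2:
  assumes c: "\<And>(X::(real\<times>real) topology) f g. continuous_map X T1 f \<Longrightarrow> continuous_map X T2 g \<Longrightarrow>
      continuous_map X T3 (\<lambda>x. F (f x) (g x))"
    and hp: "homotopic_rel_ends T1 p p'" and hq: "homotopic_rel_ends T2 q q'"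
  shows "homotopic_rel_ends T3 (\<lambda>r. F (p r) (q r)) (\<lambda>r. F (p' r) (q' r))"
proof -
  obtain h1 where h1: "continuous_map (prod_topology (top_of_set {0..1::real}) (top_of_set {0..1::real})) T1 h1"
    "\<forall>x. h1(0,x) = p x" "\<forall>x. h1(1,x) = p' x" "\<forall>t\<in>{0..1}. h1(t,0) = p 0 \<and> h1(t,1) = p 1"
    using hp unfolding homotopic_rel_ends_def homotopic_with_def by blast
  obtain h2 where h2: "continuous_map (prod_topology (top_of_set {0..1::real}) (top_of_set {0..1::real})) T2 h2"
    "\<forall>x. h2(0,x) = q x" "\<forall>x. h2(1,x) = q' x" "\<forall>t\<in>{0..1}. h2(t,0) = q 0 \<and> h2(t,1) = q 1"
    using hq unfolding homotopic_rel_ends_def homotopic_with_def by blast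
  show ?thesis
    by (rule hre_intro[where H="\<lambda>x. F (h1 x) (h2 x)"]) (use c[OF h1(1) h2(1)] h1 h2 in auto)
qed

lemma hre_map1:
  assumes c: "\<And>(X::(real\<times>real) topology) f. continuous_map X T1 f \<Longrightarrow>
      continuous_map X T3 (\<lambda>x. F (f x))"
    and hp: "homotopic_rel_ends T1 p p'"
  shows "homotopic_rel_ends T3 (\<lambda>r. F (p r)) (\<lambda>r. F (p' r))"
proof -
  obtain h1 where h1: "continuous_map (prod_topology (top_of_set {0..1::real}) (top_of_set {0..1::real})) T1 h1"
    "\<forall>x. h1(0,x) = p x" "\<forall>x. h1(1,x) = p' x" "\<forall>t\<in>{0..1}. h1(t,0) = p 0 \<and> h1(t,1) = p 1"
    using hp unfolding homotopic_rel_ends_def homotopic_with_def by blast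
  show ?thesis
    by (rule hre_intro[where H="\<lambda>x. F (h1 x)"]) (use c[OF h1(1)] h1 in auto)
qed


lemma tg_group: "topological_group G T \<Longrightarrow> group G"
  unfolding topological_group_def by blast

lemma tg_mult:
  assumes "topological_group G T" "continuous_map X T f" "continuous_map X T g"
  shows "continuous_map X T (\<lambda>x. f x \<otimes>\<^bsub>G\<^esub> g x)"
proof -
  have m: "continuous_map (prod_topology T T) T (\<lambda>(x,y). x \<otimes>\<^bsub>G\<^esub> y)"
    using assms(1) unfolding topological_group_def by blast
  show ?thesis
    using continuous_map_compose[OF continuous_map_pairedI[OF assms(2,3)] m] by (simp add: o_def)
qed

lemma tg_inv:
  assumes "topological_group G T" "continuous_map X T f"
  shows "continuous_map X T (\<lambda>x. inv\<^bsub>G\<^esub> f x)"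
proof -
  have m: "continuous_map T T (\<lambda>x. inv\<^bsub>G\<^esub> x)"
    using assms(1) unfolding topological_group_def by blast
  show ?thesis
    using continuous_map_compose[OF assms(2) m] by (simp add: o_def)
qed

lemma tg_const:
  assumes "topological_group G T" "c \<in> carrier G"
  shows "continuous_map X T (\<lambda>x. c)"
  using assms unfolding topological_group_def by simp

lemma tg_carrier:
  assumes "topological_group G T" "continuous_map X T f" "x \<in> topspace X"
  shows "f x \<in> carrier G"
  using assms unfolding topological_group_def continuous_map_def by blast

lemma tg_path_carrier:
  assumes "topological_group G T" "pathin T f" "r \<in> {0..1}"
  shows "f r \<in> carrier G"
  using tg_carrier[OF assms(1) assms(2)[unfolded pathin_def]] assms(3) by simp

definition Pi0 :: "('a,'c) monoid_scheme \<Rightarrow> 'a topology \<Rightarrow> (real \<Rightarrow> 'a) set monoid" where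
  "Pi0 G T = (pi_group G T)\<lparr>carrier := {C \<in> carrier (pi_group G T). \<forall>\<gamma>\<in>C. \<gamma> 0 = \<one>\<^bsub>G\<^esub>}\<rparr>"

lemma Pi0_carrier:
  "C \<in> carrier (Pi0 G T) \<longleftrightarrow> (\<exists>p. pathin T p \<and> p 0 = \<one>\<^bsub>G\<^esub> \<and> C = path_class T p)"
proof
  assume "C \<in> carrier (Pi0 G T)"
  then obtain p where p: "pathin T p" "C = path_class T p" "\<forall>\<gamma>\<in>C. \<gamma> 0 = \<one>\<^bsub>G\<^esub>"
    unfolding Pi0_def pi_group_def by auto
  then show "\<exists>p. pathin T p \<and> p 0 = \<one>\<^bsub>G\<^esub> \<and> C = path_class T p"
    using cls_self by blast
next
  assume "\<exists>p. pathin T p \<and> p 0 = \<one>\<^bsub>G\<^esub> \<and> C = path_class T p"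
  then obtain p where p: "pathin T p" "p 0 = \<one>\<^bsub>G\<^esub>" "C = path_class T p" by blast
  have "\<forall>\<gamma>\<in>C. \<gamma> 0 = \<one>\<^bsub>G\<^esub>"
    using p mem_cls hre_ends by metis
  then show "C \<in> carrier (Pi0 G T)"
    unfolding Pi0_def pi_group_def using p by auto
qed

lemma Pi0_cls: "pathin T p \<Longrightarrow> p 0 = \<one>\<^bsub>G\<^esub> \<Longrightarrow> path_class T p \<in> carrier (Pi0 G T)"
  using Pi0_carrier by blast

lemma Pi0_mult:
  assumes G: "topological_group G T" and p: "pathin T p" and q: "pathin T q"
  shows "path_class T p \<otimes>\<^bsub>Pi0 G T\<^esub> path_class T q = path_class T (\<lambda>r. p r \<otimes>\<^bsub>G\<^esub> q r)"
proof -
  have "homotopic_rel_ends T (\<lambda>r. rep (path_class T p) r \<otimes>\<^bsub>G\<^esub> rep (path_class T q) r) (\<lambda>r. p r \<otimes>\<^bsub>G\<^esub> q r)"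
    by (rule hre_map2[OF _ hre_sym[OF rep_cls(1)[OF p]] hre_sym[OF rep_cls(1)[OF q]]])
       (rule tg_mult[OF G])
  then show ?thesis unfolding Pi0_def pi_group_def by (simp add: cls_eq)
qed

lemma Pi0_one: "\<one>\<^bsub>Pi0 G T\<^esub> = path_class T (\<lambda>r. \<one>\<^bsub>G\<^esub>)"
  unfolding Pi0_def pi_group_def by simp

lemma path_mult: "topological_group G T \<Longrightarrow> pathin T p \<Longrightarrow> pathin T q \<Longrightarrow> pathin T (\<lambda>r. p r \<otimes>\<^bsub>G\<^esub> q r)"
  unfolding pathin_def by (rule tg_mult)
lemma path_inv: "topological_group G T \<Longrightarrow> pathin T p \<Longrightarrow> pathin T (\<lambda>r. inv\<^bsub>G\<^esub> p r)"
  unfolding pathin_def by (rule tg_inv)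
lemma path_const: "topological_group G T \<Longrightarrow> c \<in> carrier G \<Longrightarrow> pathin T (\<lambda>r. c)"
  unfolding pathin_def by (rule tg_const)

lemma Pi0_group:
  assumes G: "topological_group G T"
  shows "group (Pi0 G T)"
proof -
  interpret G: group G using tg_group[OF G] .
  note pc = tg_path_carrier[OF G]
  show ?thesis
  proof (rule groupI)
    fix x y assume "x \<in> carrier (Pi0 G T)" "y \<in> carrier (Pi0 G T)"
    then obtain p q where p: "pathin T p" "p 0 = \<one>\<^bsub>G\<^esub>" "x = path_class T p"
      and q: "pathin T q" "q 0 = \<one>\<^bsub>G\<^esub>" "y = path_class T q" by (auto simp: Pi0_carrier)
    show "x \<otimes>\<^bsub>Pi0 G T\<^esub> y \<in> carrier (Pi0 G T)"
      using p q by (simp add: Pi0_mult[OF G] Pi0_cls path_mult[OF G])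
  next
    show "\<one>\<^bsub>Pi0 G T\<^esub> \<in> carrier (Pi0 G T)"
      unfolding Pi0_one by (rule Pi0_cls[OF path_const[OF G G.one_closed]]) simp
  next
    fix x y z assume "x \<in> carrier (Pi0 G T)" "y \<in> carrier (Pi0 G T)" "z \<in> carrier (Pi0 G T)"
    then obtain p q s where p: "pathin T p" "x = path_class T p"
      and q: "pathin T q" "y = path_class T q" and s: "pathin T s" "z = path_class T s"
      by (auto simp: Pi0_carrier)
    show "x \<otimes>\<^bsub>Pi0 G T\<^esub> y \<otimes>\<^bsub>Pi0 G T\<^esub> z = x \<otimes>\<^bsub>Pi0 G T\<^esub> (y \<otimes>\<^bsub>Pi0 G T\<^esub> z)"
      using p q s
      by (simp add: Pi0_mult[OF G] path_mult[OF G]) (rule cls_pointwise, simp add: path_mult[OF G], simp add: pc G.m_assoc)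
  next
    fix x assume "x \<in> carrier (Pi0 G T)"
    then obtain p where p: "pathin T p" "x = path_class T p" by (auto simp: Pi0_carrier)
    show "\<one>\<^bsub>Pi0 G T\<^esub> \<otimes>\<^bsub>Pi0 G T\<^esub> x = x"
      using p by (simp add: Pi0_one Pi0_mult[OF G path_const[OF G G.one_closed]]) (rule cls_pointwise, simp add: path_mult[OF G path_const[OF G G.one_closed]], simp add: pc)
  next
    fix x assume "x \<in> carrier (Pi0 G T)"
    then obtain p where p: "pathin T p" "p 0 = \<one>\<^bsub>G\<^esub>" "x = path_class T p" by (auto simp: Pi0_carrier)
    show "\<exists>y\<in>carrier (Pi0 G T). y \<otimes>\<^bsub>Pi0 G T\<^esub> x = \<one>\<^bsub>Pi0 G T\<^esub>"
    proof (intro bexI)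
      show "path_class T (\<lambda>r. inv\<^bsub>G\<^esub> p r) \<in> carrier (Pi0 G T)"
        using p by (intro Pi0_cls) (auto simp: path_inv[OF G])
      show "path_class T (\<lambda>r. inv\<^bsub>G\<^esub> p r) \<otimes>\<^bsub>Pi0 G T\<^esub> x = \<one>\<^bsub>Pi0 G T\<^esub>"
        using p by (simp add: Pi0_one Pi0_mult[OF G] path_inv[OF G]) (rule cls_pointwise, simp add: path_mult[OF G] path_inv[OF G], simp add: pc)
    qed
  qed
qed

lemma Pi0_inv:
  assumes G: "topological_group G T" and p: "pathin T p" "p 0 = \<one>\<^bsub>G\<^esub>"
  shows "inv\<^bsub>Pi0 G T\<^esub> (path_class T p) = path_class T (\<lambda>r. inv\<^bsub>G\<^esub> p r)"
proof -
  interpret P: group "Pi0 G T" by (rule Pi0_group[OF G])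
  interpret G: group G using tg_group[OF G] .
  note pc = tg_path_carrier[OF G]
  show ?thesis
  proof (rule P.inv_equality)
    show "path_class T (\<lambda>r. inv\<^bsub>G\<^esub> p r) \<otimes>\<^bsub>Pi0 G T\<^esub> path_class T p = \<one>\<^bsub>Pi0 G T\<^esub>"
      using p by (simp add: Pi0_one Pi0_mult[OF G] path_inv[OF G]) (rule cls_pointwise, simp add: path_mult[OF G] path_inv[OF G], simp add: pc)
  qed (use p in \<open>auto intro!: Pi0_cls simp: path_inv[OF G]\<close>)
qed


lemma cont_fst01: "continuous_map (prod_topology (top_of_set {0..1::real}) (top_of_set {0..1::real})) euclideanreal fst"
  using continuous_map_compose[OF continuous_map_fst continuous_map_id_subt[of euclideanreal "{0..1::real}"]]
  by (simp add: o_def continuous_on_fst continuous_on_id)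
lemma cont_snd01: "continuous_map (prod_topology (top_of_set {0..1::real}) (top_of_set {0..1::real})) euclideanreal snd"
  using continuous_map_compose[OF continuous_map_snd continuous_map_id_subt[of euclideanreal "{0..1::real}"]]
  by (simp add: o_def continuous_on_snd continuous_on_id)

lemma path_comp:
  assumes "pathin T p" "continuous_map X euclideanreal g" "\<And>x. x \<in> topspace X \<Longrightarrow> g x \<in> {0..1}"
  shows "continuous_map X T (\<lambda>x. p (g x))"
proof -
  have "continuous_map X (top_of_set {0..1}) g"
    using assms(2,3) by (auto simp: continuous_map_in_subtopology)
  then show ?thesis using continuous_map_compose[OF _ assms(1)[unfolded pathin_def]] by (simp add: o_def)
qed

locale tcm =
  fixes A :: "'a monoid" and TA :: "'a topology"
    and B :: "'b monoid" and TB :: "'b topology"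
    and \<alpha> :: "'a \<Rightarrow> 'b" and act :: "'b \<Rightarrow> 'a \<Rightarrow> 'a"
  assumes tcm: "topological_crossed_module A TA B TB \<alpha> act"
begin

lemma cm: "crossed_module A B \<alpha> act" and GA: "topological_group A TA" and GB: "topological_group B TB"
  and ca: "continuous_map TA TB \<alpha>" and cact: "continuous_map (prod_topology TB TA) TA (\<lambda>(b,a). act b a)"
  using tcm unfolding topological_crossed_module_def by simp_all

lemma grA: "group A" using tg_group[OF GA] .
lemma grB: "group B" using tg_group[OF GB] .

sublocale A: group A by (rule grA)
sublocale B: group B by (rule grB)

lemma actB: "action_by_aut B A act" and ahom: "\<alpha> \<in> hom A B"
  and conj: "\<And>b a. b \<in> carrier B \<Longrightarrow> a \<in> carrier A \<Longrightarrow> \<alpha> (act b a) = b \<otimes>\<^bsub>B\<^esub> \<alpha> a \<otimes>\<^bsub>B\<^esub> inv\<^bsub>B\<^esub> b"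
  and peif: "\<And>a a'. a \<in> carrier A \<Longrightarrow> a' \<in> carrier A \<Longrightarrow> act (\<alpha> a) a' = a \<otimes>\<^bsub>A\<^esub> a' \<otimes>\<^bsub>A\<^esub> inv\<^bsub>A\<^esub> a"
  using cm unfolding crossed_module_def by simp_all

lemma act_hom: "b \<in> carrier B \<Longrightarrow> act b \<in> hom A A"
  using actB unfolding action_by_aut_def iso_def by blast
lemma act_closed [simp]: "b \<in> carrier B \<Longrightarrow> a \<in> carrier A \<Longrightarrow> act b a \<in> carrier A"
  by (rule hom_in_carrier[OF act_hom])
lemma act_mult: "b \<in> carrier B \<Longrightarrow> a \<in> carrier A \<Longrightarrow> a' \<in> carrier A \<Longrightarrow> act b (a \<otimes>\<^bsub>A\<^esub> a') = act b a \<otimes>\<^bsub>A\<^esub> act b a'"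
  by (rule hom_mult[OF act_hom])
lemma act_one [simp]: "b \<in> carrier B \<Longrightarrow> act b \<one>\<^bsub>A\<^esub> = \<one>\<^bsub>A\<^esub>"
  by (rule hom_one[OF act_hom grA grA])
lemma act_inv: "b \<in> carrier B \<Longrightarrow> a \<in> carrier A \<Longrightarrow> act b (inv\<^bsub>A\<^esub> a) = inv\<^bsub>A\<^esub> act b a"
  by (rule group_hom.hom_inv[OF group_hom.intro[OF grA grA group_hom_axioms.intro[OF act_hom]]])
lemma act_1 [simp]: "a \<in> carrier A \<Longrightarrow> act \<one>\<^bsub>B\<^esub> a = a"
  using actB unfolding action_by_aut_def by blast
lemma act_comp: "b \<in> carrier B \<Longrightarrow> b' \<in> carrier B \<Longrightarrow> a \<in> carrier A \<Longrightarrow> act (b \<otimes>\<^bsub>B\<^esub> b') a = act b (act b' a)"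
  using actB unfolding action_by_aut_def by blast
lemma al_closed [simp]: "a \<in> carrier A \<Longrightarrow> \<alpha> a \<in> carrier B"
  by (rule hom_in_carrier[OF ahom])
lemma al_mult: "a \<in> carrier A \<Longrightarrow> a' \<in> carrier A \<Longrightarrow> \<alpha> (a \<otimes>\<^bsub>A\<^esub> a') = \<alpha> a \<otimes>\<^bsub>B\<^esub> \<alpha> a'"
  by (rule hom_mult[OF ahom])
lemma al_one [simp]: "\<alpha> \<one>\<^bsub>A\<^esub> = \<one>\<^bsub>B\<^esub>"
  by (rule hom_one[OF ahom grA grB])
lemma al_inv: "a \<in> carrier A \<Longrightarrow> \<alpha> (inv\<^bsub>A\<^esub> a) = inv\<^bsub>B\<^esub> \<alpha> a"
  by (rule group_hom.hom_inv[OF group_hom.intro[OF grA grB group_hom_axioms.intro[OF ahom]]])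

lemma c_al: "continuous_map X TA f \<Longrightarrow> continuous_map X TB (\<lambda>x. \<alpha> (f x))"
  using continuous_map_compose[OF _ ca] by (simp add: o_def)
lemma c_act: "continuous_map X TB f \<Longrightarrow> continuous_map X TA g \<Longrightarrow> continuous_map X TA (\<lambda>x. act (f x) (g x))"
  using continuous_map_compose[OF continuous_map_pairedI cact] by (simp add: o_def)

lemmas cA = tg_mult[OF GA] tg_inv[OF GA] tg_const[OF GA]
lemmas cB = tg_mult[OF GB] tg_inv[OF GB] tg_const[OF GB]
lemmas crules = cA cB c_al c_act

lemma pA: "pathin TA p \<Longrightarrow> r \<in> {0..1} \<Longrightarrow> p r \<in> carrier A" by (rule tg_path_carrier[OF GA])
lemma pB: "pathin TB p \<Longrightarrow> r \<in> {0..1} \<Longrightarrow> p r \<in> carrier B" by (rule tg_path_carrier[OF GB])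

lemma cls_map:
  assumes c: "\<And>(X::(real\<times>real) topology) f. continuous_map X T1 f \<Longrightarrow> continuous_map X T3 (\<lambda>x. F (f x))"
    and p: "pathin T1 p"
  shows "path_class T3 (\<lambda>r. F (rep (path_class T1 p) r)) = path_class T3 (\<lambda>r. F (p r))"
  by (rule cls_eq[OF hre_map1[OF c hre_sym[OF rep_cls(1)[OF p]]]])

lemma lamC: "pathin TA p \<Longrightarrow> path_class TB (\<lambda>r. \<alpha> (rep (path_class TA p) r)) = path_class TB (\<lambda>r. \<alpha> (p r))"
  by (rule cls_map) (rule c_al)

end

context tcm begin

lemma actLC: "b \<in> carrier B \<Longrightarrow> pathin TA p \<Longrightarrow>
   path_class TA (\<lambda>r. act b (rep (path_class TA p) r)) = path_class TA (\<lambda>r. act b (p r))"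
  by (rule cls_map) (intro crules; simp)

lemma actMC: "b \<in> carrier B \<Longrightarrow> pathin TB p \<Longrightarrow>
   path_class TB (\<lambda>r. b \<otimes>\<^bsub>B\<^esub> rep (path_class TB p) r \<otimes>\<^bsub>B\<^esub> inv\<^bsub>B\<^esub> b) = path_class TB (\<lambda>r. b \<otimes>\<^bsub>B\<^esub> p r \<otimes>\<^bsub>B\<^esub> inv\<^bsub>B\<^esub> b)"
  by (rule cls_map[where F="\<lambda>x. b \<otimes>\<^bsub>B\<^esub> x \<otimes>\<^bsub>B\<^esub> inv\<^bsub>B\<^esub> b"]) (intro crules; simp)

lemma hC: "a \<in> carrier A \<Longrightarrow> pathin TB p \<Longrightarrow>
   path_class TA (\<lambda>r. act (rep (path_class TB p) r) a \<otimes>\<^bsub>A\<^esub> inv\<^bsub>A\<^esub> a) = path_class TA (\<lambda>r. act (p r) a \<otimes>\<^bsub>A\<^esub> inv\<^bsub>A\<^esub> a)"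
  by (rule cls_map[where F="\<lambda>x. act x a \<otimes>\<^bsub>A\<^esub> inv\<^bsub>A\<^esub> a"]) (intro crules; simp)

end

context tcm begin

lemma Pi0E:
  assumes "C \<in> carrier (Pi0 G T)"
  obtains p where "pathin T p" "p 0 = \<one>\<^bsub>G\<^esub>" "C = path_class T p"
  using assms Pi0_carrier by blast

lemma lam_eq: "pathin TA p \<Longrightarrow> path_class TB (\<lambda>r. \<alpha> (rep (path_class TA p) r)) = path_class TB (\<lambda>r. \<alpha> (p r))"
  by (rule lamC)

lemma lam_hom: "(\<lambda>C. path_class TB (\<lambda>r. \<alpha> (rep C r))) \<in> hom (Pi0 A TA) (Pi0 B TB)"
proof (rule homI)
  fix x assume "x \<in> carrier (Pi0 A TA)"
  then obtain p where p: "pathin TA p" "p 0 = \<one>\<^bsub>A\<^esub>" "x = path_class TA p" by (rule Pi0E)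
  have pp: "pathin TB (\<lambda>r. \<alpha> (p r))" using p unfolding pathin_def by (intro crules; simp)
  show "path_class TB (\<lambda>r. \<alpha> (rep x r)) \<in> carrier (Pi0 B TB)"
    using p pp by (simp add: lamC Pi0_cls)
next
  fix x y assume "x \<in> carrier (Pi0 A TA)" "y \<in> carrier (Pi0 A TA)"
  then obtain p q where p: "pathin TA p" "p 0 = \<one>\<^bsub>A\<^esub>" "x = path_class TA p"
    and q: "pathin TA q" "q 0 = \<one>\<^bsub>A\<^esub>" "y = path_class TA q" by (metis Pi0E)
  have pp: "pathin TB (\<lambda>r. \<alpha> (p r))" "pathin TB (\<lambda>r. \<alpha> (q r))" "pathin TA (\<lambda>r. p r \<otimes>\<^bsub>A\<^esub> q r)"
    "pathin TB (\<lambda>r. \<alpha> (p r \<otimes>\<^bsub>A\<^esub> q r))"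
    using p q unfolding pathin_def by (intro crules; simp)+
  show "path_class TB (\<lambda>r. \<alpha> (rep (x \<otimes>\<^bsub>Pi0 A TA\<^esub> y) r)) =
    path_class TB (\<lambda>r. \<alpha> (rep x r)) \<otimes>\<^bsub>Pi0 B TB\<^esub> path_class TB (\<lambda>r. \<alpha> (rep y r))"
    using p q pp by (simp add: lamC Pi0_mult[OF GA] Pi0_mult[OF GB])
      (rule cls_pointwise, simp, simp add: al_mult pA)
qed

end

lemma (in group) gcanc_l [simp]: "x \<in> carrier G \<Longrightarrow> y \<in> carrier G \<Longrightarrow> inv x \<otimes> (x \<otimes> y) = y"
  by (simp add: m_assoc[symmetric])
lemma (in group) gcanc_r [simp]: "x \<in> carrier G \<Longrightarrow> y \<in> carrier G \<Longrightarrow> x \<otimes> (inv x \<otimes> y) = y"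
  by (simp add: m_assoc[symmetric])

lemma range01: "s \<in> {0..1::real} \<Longrightarrow> r \<in> {0..1::real} \<Longrightarrow> s + (1 - s) * r \<in> {0..1}"
proof -
  assume a: "s \<in> {0..1::real}" "r \<in> {0..1::real}"
  have "(1 - s) * r \<le> (1 - s) * 1" using a by (intro mult_left_mono) auto
  moreover have "0 \<le> (1 - s) * r" using a by auto
  ultimately show ?thesis using a by auto
qed

lemma realc:
  "continuous_map (prod_topology (top_of_set {0..1::real}) (top_of_set {0..1::real})) euclideanreal (\<lambda>z. fst z + (1 - fst z) * snd z)"
  by (intro continuous_map_add continuous_map_real_mult continuous_map_diff cont_fst01 cont_snd01 continuous_map_canonical_const)

lemma slide:
  assumes cont: "continuous_map (prod_topology (top_of_set {0..1::real}) (top_of_set {0..1::real})) T2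
       (\<lambda>z. \<Phi> (p (fst z + (1 - fst z) * snd z)) (snd z))"
  and e0: "\<And>s. s\<in>{0..1} \<Longrightarrow> \<Phi> (p s) 0 = \<Phi> (p 0) 0"
  shows "homotopic_rel_ends T2 (\<lambda>r. \<Phi> (p r) r) (\<lambda>r. \<Phi> (p 1) r)"
proof (rule hre_intro[OF cont])
  fix s :: real assume "s \<in> {0..1}"
  then have "\<Phi> (p s) 0 = \<Phi> (p 0) 0" by (rule e0)
  then show "\<Phi> (p (fst (s, 0) + (1 - fst (s, 0)) * snd (s, 0))) (snd (s, 0)) = \<Phi> (p 0) 0"
    by simp
qed auto

lemma slide_cont:
  assumes "pathin T p"
  shows "continuous_map (prod_topology (top_of_set {0..1::real}) (top_of_set {0..1::real})) T
       (\<lambda>z. p (fst z + (1 - fst z) * snd z))"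
proof (rule path_comp[OF assms realc])
  fix z :: "real \<times> real"
  assume "z \<in> topspace (prod_topology (top_of_set {0..1::real}) (top_of_set {0..1::real}))"
  then have "fst z \<in> {0..1}" "snd z \<in> {0..1}" by (auto simp del: atLeastAtMost_iff)
  then show "fst z + (1 - fst z) * snd z \<in> {0..1}" by (rule range01)
qed

lemma snd_cont:
  assumes "pathin T p"
  shows "continuous_map (prod_topology (top_of_set {0..1::real}) (top_of_set {0..1::real})) T
       (\<lambda>z. p (snd z))"
  by (rule path_comp[OF assms cont_snd01]) auto

context tcm begin

lemma pathL: "pathin TA p \<Longrightarrow> continuous_map (top_of_set {0..1}) TA p" by (simp add: pathin_def)

lemma lam'_hom: "(\<lambda>C. rep C (1::real)) \<in> hom (Pi0 A TA) A"
proof (rule homI)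
  fix x assume "x \<in> carrier (Pi0 A TA)"
  then obtain p where p: "pathin TA p" "p 0 = \<one>\<^bsub>A\<^esub>" "x = path_class TA p" by (rule Pi0E)
  show "rep x 1 \<in> carrier A" using p by (simp add: rep_cls_ends pA)
next
  fix x y assume "x \<in> carrier (Pi0 A TA)" "y \<in> carrier (Pi0 A TA)"
  then obtain p q where p: "pathin TA p" "p 0 = \<one>\<^bsub>A\<^esub>" "x = path_class TA p"
    and q: "pathin TA q" "q 0 = \<one>\<^bsub>A\<^esub>" "y = path_class TA q" by (metis Pi0E)
  have pp: "pathin TA (\<lambda>r. p r \<otimes>\<^bsub>A\<^esub> q r)"
    using p q unfolding pathin_def by (intro crules; simp)+
  show "rep (x \<otimes>\<^bsub>Pi0 A TA\<^esub> y) 1 = rep x 1 \<otimes>\<^bsub>A\<^esub> rep y 1"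
    using p q pp by (simp add: Pi0_mult[OF GA] rep_cls_ends)
qed

lemma mu_hom: "(\<lambda>C. rep C (1::real)) \<in> hom (Pi0 B TB) B"
proof (rule homI)
  fix x assume "x \<in> carrier (Pi0 B TB)"
  then obtain p where p: "pathin TB p" "p 0 = \<one>\<^bsub>B\<^esub>" "x = path_class TB p" by (rule Pi0E)
  show "rep x 1 \<in> carrier B" using p by (simp add: rep_cls_ends pB)
next
  fix x y assume "x \<in> carrier (Pi0 B TB)" "y \<in> carrier (Pi0 B TB)"
  then obtain p q where p: "pathin TB p" "p 0 = \<one>\<^bsub>B\<^esub>" "x = path_class TB p"
    and q: "pathin TB q" "q 0 = \<one>\<^bsub>B\<^esub>" "y = path_class TB q" by (metis Pi0E)
  have pp: "pathin TB (\<lambda>r. p r \<otimes>\<^bsub>B\<^esub> q r)"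
    using p q unfolding pathin_def by (intro crules; simp)+
  show "rep (x \<otimes>\<^bsub>Pi0 B TB\<^esub> y) 1 = rep x 1 \<otimes>\<^bsub>B\<^esub> rep y 1"
    using p q pp by (simp add: Pi0_mult[OF GB] rep_cls_ends)
qed

lemma compat: "\<forall>l\<in>carrier (Pi0 A TA). \<alpha> (rep l 1) = rep (path_class TB (\<lambda>r. \<alpha> (rep l r))) 1"
proof
  fix x assume "x \<in> carrier (Pi0 A TA)"
  then obtain p where p: "pathin TA p" "p 0 = \<one>\<^bsub>A\<^esub>" "x = path_class TA p" by (rule Pi0E)
  have pp: "pathin TB (\<lambda>r. \<alpha> (p r))" using p unfolding pathin_def by (intro crules; simp)
  show "\<alpha> (rep x 1) = rep (path_class TB (\<lambda>r. \<alpha> (rep x r))) 1"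
    using p pp by (simp add: lamC rep_cls_ends)
qed

end

lemma action_by_autI:
  assumes P: "group P" and X: "group X"
    and h: "\<And>b. b \<in> carrier P \<Longrightarrow> f b \<in> hom X X"
    and one: "\<And>x. x \<in> carrier X \<Longrightarrow> f \<one>\<^bsub>P\<^esub> x = x"
    and comp: "\<And>b b' x. b \<in> carrier P \<Longrightarrow> b' \<in> carrier P \<Longrightarrow> x \<in> carrier X \<Longrightarrow> f (b \<otimes>\<^bsub>P\<^esub> b') x = f b (f b' x)"
  shows "action_by_aut P X f"
proof -
  interpret P: group P by (rule P)
  have cl: "f c x \<in> carrier X" if "c \<in> carrier P" "x \<in> carrier X" for c x
    by (rule hom_in_carrier[OF h[OF that(1)] that(2)])
  have iso: "f b \<in> iso X X" if b: "b \<in> carrier P" for b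
  proof -
    have ib: "inv\<^bsub>P\<^esub> b \<in> carrier P" using b by simp
    have e1: "f (inv\<^bsub>P\<^esub> b) (f b x) = x" if x: "x \<in> carrier X" for x
    proof -
      have "f (inv\<^bsub>P\<^esub> b) (f b x) = f (inv\<^bsub>P\<^esub> b \<otimes>\<^bsub>P\<^esub> b) x" by (rule comp[OF ib b x, symmetric])
      also have "\<dots> = f \<one>\<^bsub>P\<^esub> x" using b by simp
      also have "\<dots> = x" by (rule one[OF x])
      finally show ?thesis .
    qed
    have e2: "f b (f (inv\<^bsub>P\<^esub> b) x) = x" if x: "x \<in> carrier X" for x
    proof -
      have "f b (f (inv\<^bsub>P\<^esub> b) x) = f (b \<otimes>\<^bsub>P\<^esub> inv\<^bsub>P\<^esub> b) x" by (rule comp[OF b ib x, symmetric])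
      also have "\<dots> = f \<one>\<^bsub>P\<^esub> x" using b by simp
      also have "\<dots> = x" by (rule one[OF x])
      finally show ?thesis .
    qed
    have "bij_betw (f b) (carrier X) (carrier X)"
      by (rule bij_betwI[where g="f (inv\<^bsub>P\<^esub> b)"]) (auto intro: cl b ib e1 e2)
    then show ?thesis by (rule isoI[OF h[OF b]])
  qed
  show ?thesis unfolding action_by_aut_def
    using iso one comp by blast
qed


context tcm begin

lemma actL_aut: "action_by_aut B (Pi0 A TA) (\<lambda>b C. path_class TA (\<lambda>r. act b (rep C r)))"
proof (rule action_by_autI[OF grB Pi0_group[OF GA]])
  fix b assume b: "b \<in> carrier B"
  show "(\<lambda>C. path_class TA (\<lambda>r. act b (rep C r))) \<in> hom (Pi0 A TA) (Pi0 A TA)"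
  proof (rule homI)
    fix x assume "x \<in> carrier (Pi0 A TA)"
    then obtain p where p: "pathin TA p" "p 0 = \<one>\<^bsub>A\<^esub>" "x = path_class TA p" by (rule Pi0E)
    have pp: "pathin TA (\<lambda>r. act b (p r))" using p b unfolding pathin_def by (intro crules; simp)
    show "path_class TA (\<lambda>r. act b (rep x r)) \<in> carrier (Pi0 A TA)"
      using p pp b by (simp add: actLC Pi0_cls)
  next
    fix x y assume "x \<in> carrier (Pi0 A TA)" "y \<in> carrier (Pi0 A TA)"
    then obtain p q where p: "pathin TA p" "p 0 = \<one>\<^bsub>A\<^esub>" "x = path_class TA p"
      and q: "pathin TA q" "q 0 = \<one>\<^bsub>A\<^esub>" "y = path_class TA q" by (metis Pi0E)
    have pp: "pathin TA (\<lambda>r. act b (p r))" "pathin TA (\<lambda>r. act b (q r))" "pathin TA (\<lambda>r. p r \<otimes>\<^bsub>A\<^esub> q r)"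
      "pathin TA (\<lambda>r. act b (p r \<otimes>\<^bsub>A\<^esub> q r))"
      using p q b unfolding pathin_def by (intro crules; simp)+
    show "path_class TA (\<lambda>r. act b (rep (x \<otimes>\<^bsub>Pi0 A TA\<^esub> y) r)) =
      path_class TA (\<lambda>r. act b (rep x r)) \<otimes>\<^bsub>Pi0 A TA\<^esub> path_class TA (\<lambda>r. act b (rep y r))"
      using p q pp b by (simp add: actLC Pi0_mult[OF GA])
        (rule cls_pointwise, simp, simp add: act_mult pA)
  qed
next
  fix x assume "x \<in> carrier (Pi0 A TA)"
  then obtain p where p: "pathin TA p" "p 0 = \<one>\<^bsub>A\<^esub>" "x = path_class TA p" by (rule Pi0E)
  show "path_class TA (\<lambda>r. act \<one>\<^bsub>B\<^esub> (rep x r)) = x"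
    using p by (simp add: actLC) (rule cls_pointwise[symmetric], simp, simp add: pA)
next
  fix b b' x assume b: "b \<in> carrier B" and b': "b' \<in> carrier B" and "x \<in> carrier (Pi0 A TA)"
  then obtain p where p: "pathin TA p" "p 0 = \<one>\<^bsub>A\<^esub>" "x = path_class TA p" by (metis Pi0E)
  have pp: "pathin TA (\<lambda>r. act b' (p r))" "pathin TA (\<lambda>r. act (b \<otimes>\<^bsub>B\<^esub> b') (p r))"
    using p b b' unfolding pathin_def by (intro crules; simp)+
  show "path_class TA (\<lambda>r. act (b \<otimes>\<^bsub>B\<^esub> b') (rep x r)) =
    path_class TA (\<lambda>r. act b (rep (path_class TA (\<lambda>r. act b' (rep x r))) r))"
    using p pp b b' by (simp add: actLC) (rule cls_pointwise, simp, simp add: act_comp pA)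
qed

lemma actM_aut: "action_by_aut B (Pi0 B TB) (\<lambda>b D. path_class TB (\<lambda>r. b \<otimes>\<^bsub>B\<^esub> rep D r \<otimes>\<^bsub>B\<^esub> inv\<^bsub>B\<^esub> b))"
proof (rule action_by_autI[OF grB Pi0_group[OF GB]])
  fix b assume b: "b \<in> carrier B"
  show "(\<lambda>D. path_class TB (\<lambda>r. b \<otimes>\<^bsub>B\<^esub> rep D r \<otimes>\<^bsub>B\<^esub> inv\<^bsub>B\<^esub> b)) \<in> hom (Pi0 B TB) (Pi0 B TB)"
  proof (rule homI)
    fix x assume "x \<in> carrier (Pi0 B TB)"
    then obtain p where p: "pathin TB p" "p 0 = \<one>\<^bsub>B\<^esub>" "x = path_class TB p" by (rule Pi0E)
    have pp: "pathin TB (\<lambda>r. b \<otimes>\<^bsub>B\<^esub> p r \<otimes>\<^bsub>B\<^esub> inv\<^bsub>B\<^esub> b)" using p b unfolding pathin_def by (intro crules; simp)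
    show "path_class TB (\<lambda>r. b \<otimes>\<^bsub>B\<^esub> rep x r \<otimes>\<^bsub>B\<^esub> inv\<^bsub>B\<^esub> b) \<in> carrier (Pi0 B TB)"
      using p pp b by (simp add: actMC Pi0_cls)
  next
    fix x y assume "x \<in> carrier (Pi0 B TB)" "y \<in> carrier (Pi0 B TB)"
    then obtain p q where p: "pathin TB p" "p 0 = \<one>\<^bsub>B\<^esub>" "x = path_class TB p"
      and q: "pathin TB q" "q 0 = \<one>\<^bsub>B\<^esub>" "y = path_class TB q" by (metis Pi0E)
    have pp: "pathin TB (\<lambda>r. b \<otimes>\<^bsub>B\<^esub> p r \<otimes>\<^bsub>B\<^esub> inv\<^bsub>B\<^esub> b)" "pathin TB (\<lambda>r. b \<otimes>\<^bsub>B\<^esub> q r \<otimes>\<^bsub>B\<^esub> inv\<^bsub>B\<^esub> b)"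
      "pathin TB (\<lambda>r. p r \<otimes>\<^bsub>B\<^esub> q r)"
      "pathin TB (\<lambda>r. b \<otimes>\<^bsub>B\<^esub> (p r \<otimes>\<^bsub>B\<^esub> q r) \<otimes>\<^bsub>B\<^esub> inv\<^bsub>B\<^esub> b)"
      using p q b unfolding pathin_def by (intro crules; simp)+
    show "path_class TB (\<lambda>r. b \<otimes>\<^bsub>B\<^esub> rep (x \<otimes>\<^bsub>Pi0 B TB\<^esub> y) r \<otimes>\<^bsub>B\<^esub> inv\<^bsub>B\<^esub> b) =
      path_class TB (\<lambda>r. b \<otimes>\<^bsub>B\<^esub> rep x r \<otimes>\<^bsub>B\<^esub> inv\<^bsub>B\<^esub> b) \<otimes>\<^bsub>Pi0 B TB\<^esub> path_class TB (\<lambda>r. b \<otimes>\<^bsub>B\<^esub> rep y r \<otimes>\<^bsub>B\<^esub> inv\<^bsub>B\<^esub> b)"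
      using p q pp b by (simp add: actMC Pi0_mult[OF GB])
        (rule cls_pointwise, simp, simp add: B.m_assoc pB)
  qed
next
  fix x assume "x \<in> carrier (Pi0 B TB)"
  then obtain p where p: "pathin TB p" "p 0 = \<one>\<^bsub>B\<^esub>" "x = path_class TB p" by (rule Pi0E)
  show "path_class TB (\<lambda>r. \<one>\<^bsub>B\<^esub> \<otimes>\<^bsub>B\<^esub> rep x r \<otimes>\<^bsub>B\<^esub> inv\<^bsub>B\<^esub> \<one>\<^bsub>B\<^esub>) = x"
    unfolding p(3) actMC[OF B.one_closed p(1)] by (rule cls_pointwise[symmetric]) (use p in \<open>simp_all add: pB\<close>)
next
  fix b b' x assume b: "b \<in> carrier B" and b': "b' \<in> carrier B" and "x \<in> carrier (Pi0 B TB)"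
  then obtain p where p: "pathin TB p" "p 0 = \<one>\<^bsub>B\<^esub>" "x = path_class TB p" by (metis Pi0E)
  have pp: "pathin TB (\<lambda>r. b' \<otimes>\<^bsub>B\<^esub> p r \<otimes>\<^bsub>B\<^esub> inv\<^bsub>B\<^esub> b')"
    "pathin TB (\<lambda>r. b \<otimes>\<^bsub>B\<^esub> b' \<otimes>\<^bsub>B\<^esub> p r \<otimes>\<^bsub>B\<^esub> inv\<^bsub>B\<^esub> (b \<otimes>\<^bsub>B\<^esub> b'))"
    using p b b' unfolding pathin_def by (intro crules; simp)+
  show "path_class TB (\<lambda>r. b \<otimes>\<^bsub>B\<^esub> b' \<otimes>\<^bsub>B\<^esub> rep x r \<otimes>\<^bsub>B\<^esub> inv\<^bsub>B\<^esub> (b \<otimes>\<^bsub>B\<^esub> b')) =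
    path_class TB (\<lambda>r. b \<otimes>\<^bsub>B\<^esub> rep (path_class TB (\<lambda>r. b' \<otimes>\<^bsub>B\<^esub> rep x r \<otimes>\<^bsub>B\<^esub> inv\<^bsub>B\<^esub> b')) r \<otimes>\<^bsub>B\<^esub> inv\<^bsub>B\<^esub> b)"
    using p pp b b' by (simp add: actMC) (rule cls_pointwise, simp, simp add: B.m_assoc B.inv_mult_group pB)
qed

end

lemma range02: "s \<in> {0..1::real} \<Longrightarrow> r \<in> {0..1::real} \<Longrightarrow> 1 - s + s * r \<in> {0..1}"
  using range01[of "1 - s" r] by (simp add: algebra_simps)

lemma slide_cont2:
  assumes "pathin T p"
  shows "continuous_map (prod_topology (top_of_set {0..1::real}) (top_of_set {0..1::real})) T
       (\<lambda>z. p (1 - fst z + fst z * snd z))"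
proof (rule path_comp[OF assms])
  show "continuous_map (prod_topology (top_of_set {0..1::real}) (top_of_set {0..1::real})) euclideanreal (\<lambda>z. 1 - fst z + fst z * snd z)"
    by (intro continuous_map_add continuous_map_real_mult continuous_map_diff cont_fst01 cont_snd01 continuous_map_canonical_const)
  fix z :: "real \<times> real"
  assume "z \<in> topspace (prod_topology (top_of_set {0..1::real}) (top_of_set {0..1::real}))"
  then have "fst z \<in> {0..1}" "snd z \<in> {0..1}" by (auto simp del: atLeastAtMost_iff)
  then show "1 - fst z + fst z * snd z \<in> {0..1}" by (rule range02)
qed

context tcm begin

lemma peifM:
  assumes D: "D \<in> carrier (Pi0 B TB)" and D': "D' \<in> carrier (Pi0 B TB)"
  shows "path_class TB (\<lambda>r. rep D 1 \<otimes>\<^bsub>B\<^esub> rep D' r \<otimes>\<^bsub>B\<^esub> inv\<^bsub>B\<^esub> rep D 1)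
     = D \<otimes>\<^bsub>Pi0 B TB\<^esub> D' \<otimes>\<^bsub>Pi0 B TB\<^esub> inv\<^bsub>Pi0 B TB\<^esub> D"
proof -
  obtain p where p: "pathin TB p" "p 0 = \<one>\<^bsub>B\<^esub>" "D = path_class TB p" using D by (rule Pi0E)
  obtain q where q: "pathin TB q" "q 0 = \<one>\<^bsub>B\<^esub>" "D' = path_class TB q" using D' by (rule Pi0E)
  have p1: "p 1 \<in> carrier B" using pB[OF p(1)] by simp
  have pp: "pathin TB (\<lambda>r. inv\<^bsub>B\<^esub> p r)" "pathin TB (\<lambda>r. p r \<otimes>\<^bsub>B\<^esub> q r)"
    using p q unfolding pathin_def by (intro crules; simp)+
  have h: "homotopic_rel_ends TB (\<lambda>r. p r \<otimes>\<^bsub>B\<^esub> q r \<otimes>\<^bsub>B\<^esub> inv\<^bsub>B\<^esub> p r) (\<lambda>r. p 1 \<otimes>\<^bsub>B\<^esub> q r \<otimes>\<^bsub>B\<^esub> inv\<^bsub>B\<^esub> p 1)"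
  proof (rule slide[where \<Phi>="\<lambda>x r. x \<otimes>\<^bsub>B\<^esub> q r \<otimes>\<^bsub>B\<^esub> inv\<^bsub>B\<^esub> x" and p=p])
    show "continuous_map (prod_topology (top_of_set {0..1}) (top_of_set {0..1})) TB
     (\<lambda>z. p (fst z + (1 - fst z) * snd z) \<otimes>\<^bsub>B\<^esub> q (snd z) \<otimes>\<^bsub>B\<^esub> inv\<^bsub>B\<^esub> p (fst z + (1 - fst z) * snd z))"
      by (intro crules slide_cont[OF p(1)] snd_cont[OF q(1)])
    fix s :: real assume "s \<in> {0..1}"
    then show "p s \<otimes>\<^bsub>B\<^esub> q 0 \<otimes>\<^bsub>B\<^esub> inv\<^bsub>B\<^esub> p s = p 0 \<otimes>\<^bsub>B\<^esub> q 0 \<otimes>\<^bsub>B\<^esub> inv\<^bsub>B\<^esub> p 0"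
      using p q by (simp add: pB)
  qed
  show ?thesis
    using p q pp p1
    by (simp add: actMC rep_cls_ends Pi0_inv[OF GB] Pi0_mult[OF GB] path_mult[OF GB] cls_eq[OF hre_sym[OF h]])
qed

lemma peifL:
  assumes C: "C \<in> carrier (Pi0 A TA)" and C': "C' \<in> carrier (Pi0 A TA)"
  shows "path_class TA (\<lambda>r. act (rep (path_class TB (\<lambda>r. \<alpha> (rep C r))) 1) (rep C' r))
     = C \<otimes>\<^bsub>Pi0 A TA\<^esub> C' \<otimes>\<^bsub>Pi0 A TA\<^esub> inv\<^bsub>Pi0 A TA\<^esub> C"
proof -
  obtain p where p: "pathin TA p" "p 0 = \<one>\<^bsub>A\<^esub>" "C = path_class TA p" using C by (rule Pi0E)
  obtain q where q: "pathin TA q" "q 0 = \<one>\<^bsub>A\<^esub>" "C' = path_class TA q" using C' by (rule Pi0E)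
  have p1: "p 1 \<in> carrier A" using pA[OF p(1)] by simp
  have pp: "pathin TA (\<lambda>r. inv\<^bsub>A\<^esub> p r)" "pathin TA (\<lambda>r. p r \<otimes>\<^bsub>A\<^esub> q r)" "pathin TB (\<lambda>r. \<alpha> (p r))"
    "pathin TA (\<lambda>r. p r \<otimes>\<^bsub>A\<^esub> q r \<otimes>\<^bsub>A\<^esub> inv\<^bsub>A\<^esub> p r)"
    using p q unfolding pathin_def by (intro crules; simp)+
  have h: "homotopic_rel_ends TA (\<lambda>r. act (\<alpha> (p r)) (q r)) (\<lambda>r. act (\<alpha> (p 1)) (q r))"
  proof (rule slide[where \<Phi>="\<lambda>x r. act (\<alpha> x) (q r)" and p=p])
    show "continuous_map (prod_topology (top_of_set {0..1}) (top_of_set {0..1})) TA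
     (\<lambda>z. act (\<alpha> (p (fst z + (1 - fst z) * snd z))) (q (snd z)))"
      by (intro crules slide_cont[OF p(1)] snd_cont[OF q(1)])
    fix s :: real assume "s \<in> {0..1}"
    then show "act (\<alpha> (p s)) (q 0) = act (\<alpha> (p 0)) (q 0)"
      using p q by (simp add: pA)
  qed
  have e: "path_class TA (\<lambda>r. p r \<otimes>\<^bsub>A\<^esub> q r \<otimes>\<^bsub>A\<^esub> inv\<^bsub>A\<^esub> p r) = path_class TA (\<lambda>r. act (\<alpha> (p r)) (q r))"
    by (rule cls_pointwise) (use pp p q in \<open>simp_all add: peif pA\<close>)
  show ?thesis
    using p q pp p1
    by (simp add: lamC actLC rep_cls_ends Pi0_inv[OF GA] Pi0_mult[OF GA] path_mult[OF GA] e cls_eq[OF h])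
qed

end

context tcm begin

lemma h_carrier: "(\<lambda>D a. path_class TA (\<lambda>r. act (rep D r) a \<otimes>\<^bsub>A\<^esub> inv\<^bsub>A\<^esub> a)) \<in> carrier (Pi0 B TB) \<rightarrow> carrier A \<rightarrow> carrier (Pi0 A TA)"
proof (intro funcsetI)
  fix D a assume D: "D \<in> carrier (Pi0 B TB)" and a: "a \<in> carrier A"
  obtain p where p: "pathin TB p" "p 0 = \<one>\<^bsub>B\<^esub>" "D = path_class TB p" using D by (rule Pi0E)
  have pp: "pathin TA (\<lambda>r. act (p r) a \<otimes>\<^bsub>A\<^esub> inv\<^bsub>A\<^esub> a)" using p a unfolding pathin_def by (intro crules; simp)
  show "path_class TA (\<lambda>r. act (rep D r) a \<otimes>\<^bsub>A\<^esub> inv\<^bsub>A\<^esub> a) \<in> carrier (Pi0 A TA)"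
    using p pp a by (simp add: hC Pi0_cls)
qed

lemma lam_actL: "\<forall>b\<in>carrier B. \<forall>l\<in>carrier (Pi0 A TA).
   path_class TB (\<lambda>r. \<alpha> (rep (path_class TA (\<lambda>r. act b (rep l r))) r)) =
   path_class TB (\<lambda>r. b \<otimes>\<^bsub>B\<^esub> rep (path_class TB (\<lambda>r. \<alpha> (rep l r))) r \<otimes>\<^bsub>B\<^esub> inv\<^bsub>B\<^esub> b)"
proof (intro ballI)
  fix b l assume b: "b \<in> carrier B" and "l \<in> carrier (Pi0 A TA)"
  then obtain p where p: "pathin TA p" "p 0 = \<one>\<^bsub>A\<^esub>" "l = path_class TA p" by (metis Pi0E)
  have pp: "pathin TA (\<lambda>r. act b (p r))" "pathin TB (\<lambda>r. \<alpha> (p r))" "pathin TB (\<lambda>r. \<alpha> (act b (p r)))"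
    using p b unfolding pathin_def by (intro crules; simp)+
  show "path_class TB (\<lambda>r. \<alpha> (rep (path_class TA (\<lambda>r. act b (rep l r))) r)) =
   path_class TB (\<lambda>r. b \<otimes>\<^bsub>B\<^esub> rep (path_class TB (\<lambda>r. \<alpha> (rep l r))) r \<otimes>\<^bsub>B\<^esub> inv\<^bsub>B\<^esub> b)"
    using p pp b by (simp add: lamC actLC actMC) (rule cls_pointwise, simp, simp add: conj pA)
qed

lemma lam'_actL: "\<forall>b\<in>carrier B. \<forall>l\<in>carrier (Pi0 A TA).
   rep (path_class TA (\<lambda>r. act b (rep l r))) 1 = act b (rep l 1)"
proof (intro ballI)
  fix b l assume b: "b \<in> carrier B" and "l \<in> carrier (Pi0 A TA)"
  then obtain p where p: "pathin TA p" "p 0 = \<one>\<^bsub>A\<^esub>" "l = path_class TA p" by (metis Pi0E)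
  have pp: "pathin TA (\<lambda>r. act b (p r))"
    using p b unfolding pathin_def by (intro crules; simp)+
  show "rep (path_class TA (\<lambda>r. act b (rep l r))) 1 = act b (rep l 1)"
    using p pp b by (simp add: actLC rep_cls_ends)
qed

lemma ii_a: "\<forall>m\<in>carrier (Pi0 B TB). \<forall>n\<in>carrier A.
   path_class TB (\<lambda>r. \<alpha> (rep (path_class TA (\<lambda>r. act (rep m r) n \<otimes>\<^bsub>A\<^esub> inv\<^bsub>A\<^esub> n)) r)) =
   m \<otimes>\<^bsub>Pi0 B TB\<^esub> path_class TB (\<lambda>r. \<alpha> n \<otimes>\<^bsub>B\<^esub> rep (inv\<^bsub>Pi0 B TB\<^esub> m) r \<otimes>\<^bsub>B\<^esub> inv\<^bsub>B\<^esub> \<alpha> n)"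
proof (intro ballI)
  fix m a assume "m \<in> carrier (Pi0 B TB)" and a: "a \<in> carrier A"
  then obtain p where p: "pathin TB p" "p 0 = \<one>\<^bsub>B\<^esub>" "m = path_class TB p" by (metis Pi0E)
  have pp: "pathin TA (\<lambda>r. act (p r) a \<otimes>\<^bsub>A\<^esub> inv\<^bsub>A\<^esub> a)" "pathin TB (\<lambda>r. inv\<^bsub>B\<^esub> p r)"
    "pathin TB (\<lambda>r. \<alpha> (act (p r) a \<otimes>\<^bsub>A\<^esub> inv\<^bsub>A\<^esub> a))"
    "pathin TB (\<lambda>r. \<alpha> a \<otimes>\<^bsub>B\<^esub> inv\<^bsub>B\<^esub> p r \<otimes>\<^bsub>B\<^esub> inv\<^bsub>B\<^esub> \<alpha> a)"
    using p a unfolding pathin_def by (intro crules; simp)+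
  show "path_class TB (\<lambda>r. \<alpha> (rep (path_class TA (\<lambda>r. act (rep m r) a \<otimes>\<^bsub>A\<^esub> inv\<^bsub>A\<^esub> a)) r)) =
   m \<otimes>\<^bsub>Pi0 B TB\<^esub> path_class TB (\<lambda>r. \<alpha> a \<otimes>\<^bsub>B\<^esub> rep (inv\<^bsub>Pi0 B TB\<^esub> m) r \<otimes>\<^bsub>B\<^esub> inv\<^bsub>B\<^esub> \<alpha> a)"
    using p pp a by (simp add: hC lamC actMC Pi0_inv[OF GB] Pi0_mult[OF GB])
      (rule cls_pointwise, simp, simp add: al_mult conj al_inv pB B.m_assoc)
qed

lemma ii_b: "\<forall>m\<in>carrier (Pi0 B TB). \<forall>n\<in>carrier A.
   rep (path_class TA (\<lambda>r. act (rep m r) n \<otimes>\<^bsub>A\<^esub> inv\<^bsub>A\<^esub> n)) 1 = act (rep m 1) n \<otimes>\<^bsub>A\<^esub> inv\<^bsub>A\<^esub> n"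
proof (intro ballI)
  fix m a assume "m \<in> carrier (Pi0 B TB)" and a: "a \<in> carrier A"
  then obtain p where p: "pathin TB p" "p 0 = \<one>\<^bsub>B\<^esub>" "m = path_class TB p" by (metis Pi0E)
  have pp: "pathin TA (\<lambda>r. act (p r) a \<otimes>\<^bsub>A\<^esub> inv\<^bsub>A\<^esub> a)"
    using p a unfolding pathin_def by (intro crules; simp)+
  show "rep (path_class TA (\<lambda>r. act (rep m r) a \<otimes>\<^bsub>A\<^esub> inv\<^bsub>A\<^esub> a)) 1 = act (rep m 1) a \<otimes>\<^bsub>A\<^esub> inv\<^bsub>A\<^esub> a"
    using p pp a by (simp add: hC rep_cls_ends)
qed

lemma iii_a: "\<forall>l\<in>carrier (Pi0 A TA). \<forall>n\<in>carrier A.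
   path_class TA (\<lambda>r. act (rep (path_class TB (\<lambda>r. \<alpha> (rep l r))) r) n \<otimes>\<^bsub>A\<^esub> inv\<^bsub>A\<^esub> n) =
   l \<otimes>\<^bsub>Pi0 A TA\<^esub> path_class TA (\<lambda>r. act (\<alpha> n) (rep (inv\<^bsub>Pi0 A TA\<^esub> l) r))"
proof (intro ballI)
  fix l a assume "l \<in> carrier (Pi0 A TA)" and a: "a \<in> carrier A"
  then obtain p where p: "pathin TA p" "p 0 = \<one>\<^bsub>A\<^esub>" "l = path_class TA p" by (metis Pi0E)
  have pp: "pathin TB (\<lambda>r. \<alpha> (p r))" "pathin TA (\<lambda>r. inv\<^bsub>A\<^esub> p r)"
    "pathin TA (\<lambda>r. act (\<alpha> a) (inv\<^bsub>A\<^esub> p r))" "pathin TA (\<lambda>r. act (\<alpha> (p r)) a \<otimes>\<^bsub>A\<^esub> inv\<^bsub>A\<^esub> a)"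
    using p a unfolding pathin_def by (intro crules; simp)+
  show "path_class TA (\<lambda>r. act (rep (path_class TB (\<lambda>r. \<alpha> (rep l r))) r) a \<otimes>\<^bsub>A\<^esub> inv\<^bsub>A\<^esub> a) =
   l \<otimes>\<^bsub>Pi0 A TA\<^esub> path_class TA (\<lambda>r. act (\<alpha> a) (rep (inv\<^bsub>Pi0 A TA\<^esub> l) r))"
    using p pp a by (simp add: hC lamC actLC Pi0_inv[OF GA] Pi0_mult[OF GA])
      (rule cls_pointwise, simp, simp add: peif pA A.m_assoc)
qed

end

context tcm begin

lemma act_inv_cancel [simp]: "b \<in> carrier B \<Longrightarrow> a \<in> carrier A \<Longrightarrow> act (inv\<^bsub>B\<^esub> b) (act b a) = a"
  using act_comp[of "inv\<^bsub>B\<^esub> b" b a] by simp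

lemma iii_b: "\<forall>m\<in>carrier (Pi0 B TB). \<forall>l\<in>carrier (Pi0 A TA).
   path_class TA (\<lambda>r. act (rep m r) (rep l 1) \<otimes>\<^bsub>A\<^esub> inv\<^bsub>A\<^esub> rep l 1) =
   path_class TA (\<lambda>r. act (rep m 1) (rep l r)) \<otimes>\<^bsub>Pi0 A TA\<^esub> inv\<^bsub>Pi0 A TA\<^esub> l"
proof (intro ballI)
  fix m l assume "m \<in> carrier (Pi0 B TB)" "l \<in> carrier (Pi0 A TA)"
  then obtain \<beta> \<gamma> where b: "pathin TB \<beta>" "\<beta> 0 = \<one>\<^bsub>B\<^esub>" "m = path_class TB \<beta>"
    and g: "pathin TA \<gamma>" "\<gamma> 0 = \<one>\<^bsub>A\<^esub>" "l = path_class TA \<gamma>" by (metis Pi0E)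
  have g1: "\<gamma> 1 \<in> carrier A" and b1: "\<beta> 1 \<in> carrier B" using pA[OF g(1)] pB[OF b(1)] by auto
  have pp: "pathin TA (\<lambda>r. act (\<beta> r) (\<gamma> 1) \<otimes>\<^bsub>A\<^esub> inv\<^bsub>A\<^esub> \<gamma> 1)"
    "pathin TA (\<lambda>r. act (\<beta> 1) (\<gamma> r))" "pathin TA (\<lambda>r. inv\<^bsub>A\<^esub> \<gamma> r)"
    using b g g1 b1 unfolding pathin_def by (intro crules; simp)+
  have h1: "homotopic_rel_ends TA (\<lambda>r. act (\<beta> r) (\<gamma> 1) \<otimes>\<^bsub>A\<^esub> inv\<^bsub>A\<^esub> \<gamma> 1)
        (\<lambda>r. act (\<beta> r) (\<gamma> r) \<otimes>\<^bsub>A\<^esub> inv\<^bsub>A\<^esub> \<gamma> r)"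
  proof (rule hre_intro[where H="\<lambda>z. act (\<beta> (snd z)) (\<gamma> (1 - fst z + fst z * snd z)) \<otimes>\<^bsub>A\<^esub> inv\<^bsub>A\<^esub> \<gamma> (1 - fst z + fst z * snd z)"])
    show "continuous_map (prod_topology (top_of_set {0..1}) (top_of_set {0..1})) TA
     (\<lambda>z. act (\<beta> (snd z)) (\<gamma> (1 - fst z + fst z * snd z)) \<otimes>\<^bsub>A\<^esub> inv\<^bsub>A\<^esub> \<gamma> (1 - fst z + fst z * snd z))"
      by (intro crules snd_cont[OF b(1)] slide_cont2[OF g(1)])
    fix s :: real assume s: "s \<in> {0..1}"
    then have "\<gamma> (1 - s) \<in> carrier A" by (intro pA[OF g(1)]) auto
    then show "act (\<beta> (snd (s, 0))) (\<gamma> (1 - fst (s, 0) + fst (s, 0) * snd (s, 0))) \<otimes>\<^bsub>A\<^esub> inv\<^bsub>A\<^esub> \<gamma> (1 - fst (s, 0) + fst (s, 0) * snd (s, 0)) =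
       act (\<beta> 0) (\<gamma> 1) \<otimes>\<^bsub>A\<^esub> inv\<^bsub>A\<^esub> \<gamma> 1"
      using b g1 by simp
  qed auto
  have h2: "homotopic_rel_ends TA (\<lambda>r. act (\<beta> r) (\<gamma> r) \<otimes>\<^bsub>A\<^esub> inv\<^bsub>A\<^esub> \<gamma> r)
        (\<lambda>r. act (\<beta> 1) (\<gamma> r) \<otimes>\<^bsub>A\<^esub> inv\<^bsub>A\<^esub> \<gamma> r)"
  proof (rule hre_intro[where H="\<lambda>z. act (\<beta> (fst z + (1 - fst z) * snd z)) (\<gamma> (snd z)) \<otimes>\<^bsub>A\<^esub> inv\<^bsub>A\<^esub> \<gamma> (snd z)"])
    show "continuous_map (prod_topology (top_of_set {0..1}) (top_of_set {0..1})) TA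
     (\<lambda>z. act (\<beta> (fst z + (1 - fst z) * snd z)) (\<gamma> (snd z)) \<otimes>\<^bsub>A\<^esub> inv\<^bsub>A\<^esub> \<gamma> (snd z))"
      by (intro crules snd_cont[OF g(1)] slide_cont[OF b(1)])
    fix s :: real assume s: "s \<in> {0..1}"
    then have "\<beta> s \<in> carrier B" by (intro pB[OF b(1)])
    then show "act (\<beta> (fst (s, 0) + (1 - fst (s, 0)) * snd (s, 0))) (\<gamma> (snd (s, 0))) \<otimes>\<^bsub>A\<^esub> inv\<^bsub>A\<^esub> \<gamma> (snd (s, 0)) =
       act (\<beta> 0) (\<gamma> 0) \<otimes>\<^bsub>A\<^esub> inv\<^bsub>A\<^esub> \<gamma> 0"
      using b g by simp
  qed auto
  show "path_class TA (\<lambda>r. act (rep m r) (rep l 1) \<otimes>\<^bsub>A\<^esub> inv\<^bsub>A\<^esub> rep l 1) =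
   path_class TA (\<lambda>r. act (rep m 1) (rep l r)) \<otimes>\<^bsub>Pi0 A TA\<^esub> inv\<^bsub>Pi0 A TA\<^esub> l"
    using b g pp g1 b1
    by (simp add: rep_cls_ends hC actLC Pi0_inv[OF GA] Pi0_mult[OF GA] cls_eq[OF hre_trans[OF h1 h2]])
qed

lemma iv_a: "\<forall>m\<in>carrier (Pi0 B TB). \<forall>m'\<in>carrier (Pi0 B TB). \<forall>n\<in>carrier A.
   path_class TA (\<lambda>r. act (rep (m \<otimes>\<^bsub>Pi0 B TB\<^esub> m') r) n \<otimes>\<^bsub>A\<^esub> inv\<^bsub>A\<^esub> n) =
   path_class TA (\<lambda>r. act (rep m 1) (rep (path_class TA (\<lambda>r. act (rep m' r) n \<otimes>\<^bsub>A\<^esub> inv\<^bsub>A\<^esub> n)) r)) \<otimes>\<^bsub>Pi0 A TA\<^esub>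
   path_class TA (\<lambda>r. act (rep m r) n \<otimes>\<^bsub>A\<^esub> inv\<^bsub>A\<^esub> n)"
proof (intro ballI)
  fix m m' a assume "m \<in> carrier (Pi0 B TB)" "m' \<in> carrier (Pi0 B TB)" and a: "a \<in> carrier A"
  then obtain p q where p: "pathin TB p" "p 0 = \<one>\<^bsub>B\<^esub>" "m = path_class TB p"
    and q: "pathin TB q" "q 0 = \<one>\<^bsub>B\<^esub>" "m' = path_class TB q" by (metis Pi0E)
  have p1: "p 1 \<in> carrier B" using pB[OF p(1)] by simp
  have pp: "pathin TB (\<lambda>r. p r \<otimes>\<^bsub>B\<^esub> q r)" "pathin TA (\<lambda>r. act (q r) a \<otimes>\<^bsub>A\<^esub> inv\<^bsub>A\<^esub> a)"
    "pathin TA (\<lambda>r. act (p r) a \<otimes>\<^bsub>A\<^esub> inv\<^bsub>A\<^esub> a)"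
    "pathin TA (\<lambda>r. act (p 1) (act (q r) a \<otimes>\<^bsub>A\<^esub> inv\<^bsub>A\<^esub> a))"
    "pathin TA (\<lambda>r. act (p r \<otimes>\<^bsub>B\<^esub> q r) a \<otimes>\<^bsub>A\<^esub> inv\<^bsub>A\<^esub> a)"
    using p q a p1 unfolding pathin_def by (intro crules; simp)+
  have h: "homotopic_rel_ends TA
     (\<lambda>r. act (p r) (act (q r) a \<otimes>\<^bsub>A\<^esub> inv\<^bsub>A\<^esub> a) \<otimes>\<^bsub>A\<^esub> (act (p r) a \<otimes>\<^bsub>A\<^esub> inv\<^bsub>A\<^esub> a))
     (\<lambda>r. act (p 1) (act (q r) a \<otimes>\<^bsub>A\<^esub> inv\<^bsub>A\<^esub> a) \<otimes>\<^bsub>A\<^esub> (act (p r) a \<otimes>\<^bsub>A\<^esub> inv\<^bsub>A\<^esub> a))"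
  proof (rule slide[where \<Phi>="\<lambda>x r. act x (act (q r) a \<otimes>\<^bsub>A\<^esub> inv\<^bsub>A\<^esub> a) \<otimes>\<^bsub>A\<^esub> (act (p r) a \<otimes>\<^bsub>A\<^esub> inv\<^bsub>A\<^esub> a)" and p=p])
    show "continuous_map (prod_topology (top_of_set {0..1}) (top_of_set {0..1})) TA
     (\<lambda>z. act (p (fst z + (1 - fst z) * snd z)) (act (q (snd z)) a \<otimes>\<^bsub>A\<^esub> inv\<^bsub>A\<^esub> a) \<otimes>\<^bsub>A\<^esub> (act (p (snd z)) a \<otimes>\<^bsub>A\<^esub> inv\<^bsub>A\<^esub> a))"
      by (intro crules slide_cont[OF p(1)] snd_cont[OF q(1)] snd_cont[OF p(1)]; simp add: a)
    fix s :: real assume "s \<in> {0..1}"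
    then have "p s \<in> carrier B" by (rule pB[OF p(1)])
    then show "act (p s) (act (q 0) a \<otimes>\<^bsub>A\<^esub> inv\<^bsub>A\<^esub> a) \<otimes>\<^bsub>A\<^esub> (act (p 0) a \<otimes>\<^bsub>A\<^esub> inv\<^bsub>A\<^esub> a) =
        act (p 0) (act (q 0) a \<otimes>\<^bsub>A\<^esub> inv\<^bsub>A\<^esub> a) \<otimes>\<^bsub>A\<^esub> (act (p 0) a \<otimes>\<^bsub>A\<^esub> inv\<^bsub>A\<^esub> a)"
      using p q a by simp
  qed
  have e: "path_class TA (\<lambda>r. act (p r \<otimes>\<^bsub>B\<^esub> q r) a \<otimes>\<^bsub>A\<^esub> inv\<^bsub>A\<^esub> a) =
     path_class TA (\<lambda>r. act (p r) (act (q r) a \<otimes>\<^bsub>A\<^esub> inv\<^bsub>A\<^esub> a) \<otimes>\<^bsub>A\<^esub> (act (p r) a \<otimes>\<^bsub>A\<^esub> inv\<^bsub>A\<^esub> a))"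
    by (rule cls_pointwise) (use pp p q a in \<open>simp_all add: pB act_comp act_mult act_inv A.m_assoc\<close>)
  show "path_class TA (\<lambda>r. act (rep (m \<otimes>\<^bsub>Pi0 B TB\<^esub> m') r) a \<otimes>\<^bsub>A\<^esub> inv\<^bsub>A\<^esub> a) =
   path_class TA (\<lambda>r. act (rep m 1) (rep (path_class TA (\<lambda>r. act (rep m' r) a \<otimes>\<^bsub>A\<^esub> inv\<^bsub>A\<^esub> a)) r)) \<otimes>\<^bsub>Pi0 A TA\<^esub>
   path_class TA (\<lambda>r. act (rep m r) a \<otimes>\<^bsub>A\<^esub> inv\<^bsub>A\<^esub> a)"
    using p q pp a p1
    by (simp add: rep_cls_ends hC actLC Pi0_mult[OF GA] Pi0_mult[OF GB] e cls_eq[OF h])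
qed

lemma iv_b: "\<forall>m\<in>carrier (Pi0 B TB). \<forall>n\<in>carrier A. \<forall>n'\<in>carrier A.
   path_class TA (\<lambda>r. act (rep m r) (n \<otimes>\<^bsub>A\<^esub> n') \<otimes>\<^bsub>A\<^esub> inv\<^bsub>A\<^esub> (n \<otimes>\<^bsub>A\<^esub> n')) =
   path_class TA (\<lambda>r. act (rep m r) n \<otimes>\<^bsub>A\<^esub> inv\<^bsub>A\<^esub> n) \<otimes>\<^bsub>Pi0 A TA\<^esub>
   path_class TA (\<lambda>r. act (\<alpha> n) (rep (path_class TA (\<lambda>r. act (rep m r) n' \<otimes>\<^bsub>A\<^esub> inv\<^bsub>A\<^esub> n')) r))"
proof (intro ballI)
  fix m a a' assume "m \<in> carrier (Pi0 B TB)" and a: "a \<in> carrier A" and a': "a' \<in> carrier A"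
  then obtain p where p: "pathin TB p" "p 0 = \<one>\<^bsub>B\<^esub>" "m = path_class TB p" by (metis Pi0E)
  have pp: "pathin TA (\<lambda>r. act (p r) a \<otimes>\<^bsub>A\<^esub> inv\<^bsub>A\<^esub> a)" "pathin TA (\<lambda>r. act (p r) a' \<otimes>\<^bsub>A\<^esub> inv\<^bsub>A\<^esub> a')"
    "pathin TA (\<lambda>r. act (p r) (a \<otimes>\<^bsub>A\<^esub> a') \<otimes>\<^bsub>A\<^esub> inv\<^bsub>A\<^esub> (a \<otimes>\<^bsub>A\<^esub> a'))"
    "pathin TA (\<lambda>r. act (\<alpha> a) (act (p r) a' \<otimes>\<^bsub>A\<^esub> inv\<^bsub>A\<^esub> a'))"
    using p a a' unfolding pathin_def by (intro crules; simp)+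
  show "path_class TA (\<lambda>r. act (rep m r) (a \<otimes>\<^bsub>A\<^esub> a') \<otimes>\<^bsub>A\<^esub> inv\<^bsub>A\<^esub> (a \<otimes>\<^bsub>A\<^esub> a')) =
   path_class TA (\<lambda>r. act (rep m r) a \<otimes>\<^bsub>A\<^esub> inv\<^bsub>A\<^esub> a) \<otimes>\<^bsub>Pi0 A TA\<^esub>
   path_class TA (\<lambda>r. act (\<alpha> a) (rep (path_class TA (\<lambda>r. act (rep m r) a' \<otimes>\<^bsub>A\<^esub> inv\<^bsub>A\<^esub> a')) r))"
    using p pp a a'
    by (simp add: hC actLC Pi0_mult[OF GA])
      (rule cls_pointwise, simp, simp add: pB act_mult peif A.m_assoc A.inv_mult_group)
qed

lemma v_eq: "\<forall>b\<in>carrier B. \<forall>m\<in>carrier (Pi0 B TB). \<forall>n\<in>carrier A.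
   path_class TA (\<lambda>r. act (rep (path_class TB (\<lambda>r. b \<otimes>\<^bsub>B\<^esub> rep m r \<otimes>\<^bsub>B\<^esub> inv\<^bsub>B\<^esub> b)) r) (act b n) \<otimes>\<^bsub>A\<^esub> inv\<^bsub>A\<^esub> act b n) =
   path_class TA (\<lambda>r. act b (rep (path_class TA (\<lambda>r. act (rep m r) n \<otimes>\<^bsub>A\<^esub> inv\<^bsub>A\<^esub> n)) r))"
proof (intro ballI)
  fix b m a assume b: "b \<in> carrier B" and "m \<in> carrier (Pi0 B TB)" and a: "a \<in> carrier A"
  then obtain p where p: "pathin TB p" "p 0 = \<one>\<^bsub>B\<^esub>" "m = path_class TB p" by (metis Pi0E)
  have ba: "act b a \<in> carrier A" using a b by simp
  have pp: "pathin TB (\<lambda>r. b \<otimes>\<^bsub>B\<^esub> p r \<otimes>\<^bsub>B\<^esub> inv\<^bsub>B\<^esub> b)" "pathin TA (\<lambda>r. act (p r) a \<otimes>\<^bsub>A\<^esub> inv\<^bsub>A\<^esub> a)"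
    "pathin TA (\<lambda>r. act (b \<otimes>\<^bsub>B\<^esub> p r \<otimes>\<^bsub>B\<^esub> inv\<^bsub>B\<^esub> b) (act b a) \<otimes>\<^bsub>A\<^esub> inv\<^bsub>A\<^esub> act b a)"
    "pathin TA (\<lambda>r. act b (act (p r) a \<otimes>\<^bsub>A\<^esub> inv\<^bsub>A\<^esub> a))"
    using p a b unfolding pathin_def by (intro crules; simp)+
  show "path_class TA (\<lambda>r. act (rep (path_class TB (\<lambda>r. b \<otimes>\<^bsub>B\<^esub> rep m r \<otimes>\<^bsub>B\<^esub> inv\<^bsub>B\<^esub> b)) r) (act b a) \<otimes>\<^bsub>A\<^esub> inv\<^bsub>A\<^esub> act b a) =
   path_class TA (\<lambda>r. act b (rep (path_class TA (\<lambda>r. act (rep m r) a \<otimes>\<^bsub>A\<^esub> inv\<^bsub>A\<^esub> a)) r))"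
    using p pp a b ba
    by (simp add: hC actLC actMC hC[OF ba pp(1)])
      (rule cls_pointwise, simp, simp add: pB act_mult act_comp act_inv)
qed

end

context tcm begin

lemma cmM: "crossed_module (Pi0 B TB) B (\<lambda>D. rep D 1) (\<lambda>b D. path_class TB (\<lambda>r. b \<otimes>\<^bsub>B\<^esub> rep D r \<otimes>\<^bsub>B\<^esub> inv\<^bsub>B\<^esub> b))"
  unfolding crossed_module_def
proof (intro conjI ballI)
  show "group (Pi0 B TB)" by (rule Pi0_group[OF GB])
  show "group B" by (rule grB)
  show "action_by_aut B (Pi0 B TB) (\<lambda>b D. path_class TB (\<lambda>r. b \<otimes>\<^bsub>B\<^esub> rep D r \<otimes>\<^bsub>B\<^esub> inv\<^bsub>B\<^esub> b))" by (rule actM_aut)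
  show "(\<lambda>D. rep D 1) \<in> hom (Pi0 B TB) B" by (rule mu_hom)
next
  fix b D assume b: "b \<in> carrier B" and "D \<in> carrier (Pi0 B TB)"
  then obtain p where p: "pathin TB p" "p 0 = \<one>\<^bsub>B\<^esub>" "D = path_class TB p" by (metis Pi0E)
  have pp: "pathin TB (\<lambda>r. b \<otimes>\<^bsub>B\<^esub> p r \<otimes>\<^bsub>B\<^esub> inv\<^bsub>B\<^esub> b)" using p b unfolding pathin_def by (intro crules; simp)
  show "rep (path_class TB (\<lambda>r. b \<otimes>\<^bsub>B\<^esub> rep D r \<otimes>\<^bsub>B\<^esub> inv\<^bsub>B\<^esub> b)) 1 = b \<otimes>\<^bsub>B\<^esub> rep D 1 \<otimes>\<^bsub>B\<^esub> inv\<^bsub>B\<^esub> b"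
    using p pp b by (simp add: actMC rep_cls_ends)
next
  fix D D' assume "D \<in> carrier (Pi0 B TB)" "D' \<in> carrier (Pi0 B TB)"
  then show "path_class TB (\<lambda>r. rep D 1 \<otimes>\<^bsub>B\<^esub> rep D' r \<otimes>\<^bsub>B\<^esub> inv\<^bsub>B\<^esub> rep D 1) = D \<otimes>\<^bsub>Pi0 B TB\<^esub> D' \<otimes>\<^bsub>Pi0 B TB\<^esub> inv\<^bsub>Pi0 B TB\<^esub> D"
    by (rule peifM)
qed

lemma cmL: "crossed_module (Pi0 A TA) B (\<lambda>l. rep (path_class TB (\<lambda>r. \<alpha> (rep l r))) 1) (\<lambda>b C. path_class TA (\<lambda>r. act b (rep C r)))"
  unfolding crossed_module_def
proof (intro conjI ballI)
  show "group (Pi0 A TA)" by (rule Pi0_group[OF GA])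
  show "group B" by (rule grB)
  show "action_by_aut B (Pi0 A TA) (\<lambda>b C. path_class TA (\<lambda>r. act b (rep C r)))" by (rule actL_aut)
  show "(\<lambda>l. rep (path_class TB (\<lambda>r. \<alpha> (rep l r))) 1) \<in> hom (Pi0 A TA) B"
    using hom_compose[OF lam_hom mu_hom] unfolding o_def .
next
  fix b C assume b: "b \<in> carrier B" and "C \<in> carrier (Pi0 A TA)"
  then obtain p where p: "pathin TA p" "p 0 = \<one>\<^bsub>A\<^esub>" "C = path_class TA p" by (metis Pi0E)
  have pp: "pathin TA (\<lambda>r. act b (p r))" "pathin TB (\<lambda>r. \<alpha> (act b (p r)))" "pathin TB (\<lambda>r. \<alpha> (p r))"
    using p b unfolding pathin_def by (intro crules; simp)+
  show "rep (path_class TB (\<lambda>r. \<alpha> (rep (path_class TA (\<lambda>r. act b (rep C r))) r))) 1 =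
      b \<otimes>\<^bsub>B\<^esub> rep (path_class TB (\<lambda>r. \<alpha> (rep C r))) 1 \<otimes>\<^bsub>B\<^esub> inv\<^bsub>B\<^esub> b"
    using p pp b by (simp add: actLC lamC rep_cls_ends conj pA)
next
  fix C C' assume "C \<in> carrier (Pi0 A TA)" "C' \<in> carrier (Pi0 A TA)"
  then show "path_class TA (\<lambda>r. act (rep (path_class TB (\<lambda>r. \<alpha> (rep C r))) 1) (rep C' r)) = C \<otimes>\<^bsub>Pi0 A TA\<^esub> C' \<otimes>\<^bsub>Pi0 A TA\<^esub> inv\<^bsub>Pi0 A TA\<^esub> C"
    by (rule peifL)
qed

end

theorem mainTheorem11:
  fixes A :: "'a monoid" and TA :: "'a topology"
    and B :: "'b monoid" and TB :: "'b topology"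
    and \<alpha> :: "'a \<Rightarrow> 'b" and act :: "'b \<Rightarrow> 'a \<Rightarrow> 'a"
  assumes "topological_crossed_module A TA B TB \<alpha> act"
  defines "L \<equiv> (pi_group A TA)\<lparr>carrier := {C \<in> carrier (pi_group A TA). \<forall>\<gamma>\<in>C. \<gamma> 0 = \<one>\<^bsub>A\<^esub>}\<rparr>"
      and "M \<equiv> (pi_group B TB)\<lparr>carrier := {D \<in> carrier (pi_group B TB). \<forall>\<beta>\<in>D. \<beta> 0 = \<one>\<^bsub>B\<^esub>}\<rparr>"
      and "lam \<equiv> (\<lambda>C. path_class TB (\<lambda>r. \<alpha> (rep C r)))"
      and "lam' \<equiv> (\<lambda>C. rep C 1)"
      and "mu \<equiv> (\<lambda>D. rep D 1)"
      and "actL \<equiv> (\<lambda>b C. path_class TA (\<lambda>r. act b (rep C r)))"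
      and "actM \<equiv> (\<lambda>b D. path_class TB (\<lambda>r. b \<otimes>\<^bsub>B\<^esub> rep D r \<otimes>\<^bsub>B\<^esub> inv\<^bsub>B\<^esub> b))"
      and "h \<equiv> (\<lambda>D a. path_class TA (\<lambda>r. act (rep D r) a \<otimes>\<^bsub>A\<^esub> inv\<^bsub>A\<^esub> a))"
  shows "crossed_square L M A B lam lam' mu \<alpha> actL actM act h"
proof -
  interpret tcm A TA B TB \<alpha> act by (rule tcm.intro[OF assms(1)])
  have LL: "L = Pi0 A TA" unfolding L_def Pi0_def ..
  have MM: "M = Pi0 B TB" unfolding M_def Pi0_def ..
  show ?thesis
    unfolding crossed_square_def LL MM lam_def lam'_def mu_def actL_def actM_def h_def
    apply (intro conjI)
    apply (rule lam_hom)
    apply (rule lam'_hom)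
    apply (rule mu_hom)
    apply (rule ahom)
    apply (rule compat)
    apply (rule actL_aut)
    apply (rule actM_aut)
    apply (rule actB)
    apply (rule h_carrier)
    apply (rule lam_actL)
    apply (rule lam'_actL)
    apply (rule cmM)
    apply (rule cm)
    apply (rule cmL)
    apply (rule ii_a)
    apply (rule ii_b)
    apply (rule iii_a)
    apply (rule iii_b)
    apply (rule iv_a)
    apply (rule iv_b)
    apply (rule v_eq)
    done
qed


end
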